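(* For a prime $N\ge3$, \[ \frac1{N-1}\sum_{w=1}^{N-1}\frac1{N^2}\sum_{h=1}^{N-1}\frac{\cot^2(\pi hw/N)}{h^2}=\frac{N-2}{3N^2}H_{N-1}(2)\le\frac{\pi^2}{18N}. \]
   Context: $H_n(a)=\sum_{h=1}^n h^{-a}$ denotes the harmonic number of order $a$. *)

theory Defs
  imports "HOL-Analysis.Analysis"
begin

definition harm_ord :: "nat \<Rightarrow> real \<Rightarrow> real" where
  "harm_ord n a = (\<Sum>h=1..n. real h powr (- a))"

end

theory Submission
  imports Defs
begin

lemma h1: "((\<zeta>::complex) - 1) * (\<Sum>j<n. of_nat j * \<zeta>^j) = of_nat n * \<zeta>^n - (\<Sum>j<n. \<zeta>^(Suc j))"
  by (induction n) (auto simp: algebra_simps)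

lemma h2: assumes "(\<zeta>::complex)^N = 1" "\<zeta> \<noteq> 1" "N > 0"
  shows "1/(\<zeta>-1) = (\<Sum>j<N. of_nat j * \<zeta>^j) / of_nat N"
proof -
  have g: "(\<Sum>j<N. \<zeta>^j) = 0" using assms by (simp add: sum_gp_strict)
  have "(\<Sum>j<N. \<zeta>^(Suc j)) = \<zeta> * (\<Sum>j<N. \<zeta>^j)" by (simp add: sum_distrib_left)
  with g h1[of \<zeta> N] assms have "(\<zeta> - 1) * (\<Sum>j<N. of_nat j * \<zeta>^j) = of_nat N" by simp
  moreover have "\<zeta> - 1 \<noteq> 0" using assms by simp
  ultimately show ?thesis using assms by (simp add: field_simps)
qed

lemma h3: assumes "(\<zeta>::complex) \<noteq> 1"
  shows "\<zeta>^j/(\<zeta>-1) = (\<Sum>m<j. \<zeta>^m) + 1/(\<zeta>-1)"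
proof -
  have "1 - \<zeta> \<noteq> 0" "\<zeta> - 1 \<noteq> 0" using assms by auto
  then show ?thesis using assms by (simp add: sum_gp_strict field_simps)
qed

lemma gauss1: "2*(\<Sum>j<n. (of_nat j::complex)) = of_nat n*(of_nat n - 1)"
  by (induction n) (auto simp: algebra_simps)
lemma gauss2: "6*(\<Sum>j<n. (of_nat j::complex)^2) = of_nat n*(of_nat n - 1)*(2 * of_nat n - 1)"
  by (induction n) (auto simp: algebra_simps power2_eq_square)

lemma core:
  fixes z :: "nat \<Rightarrow> complex" and N :: nat
  assumes N: "N \<ge> 2"
    and ne1: "\<And>w. w \<in> {1..N-1} \<Longrightarrow> z w \<noteq> 1"
    and rootN: "\<And>w. w \<in> {1..N-1} \<Longrightarrow> z w ^ N = 1"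
    and sums: "\<And>m. 1 \<le> m \<Longrightarrow> m < N \<Longrightarrow> (\<Sum>w=1..N-1. z w ^ m) = -1"
  shows "(\<Sum>w=1..N-1. (\<i>*(z w+1)/(z w-1))^2) = (of_nat N - 1)*(of_nat N - 2)/3"
proof -
  define W where "W = {1..N-1}"
  define u where "u w = 1/(z w - 1)" for w
  define n :: complex where "n = of_nat N"
  have n0: "n \<noteq> 0" using N by (simp add: n_def)
  have uj: "u w = (\<Sum>j<N. of_nat j * z w^j) / n" if "w \<in> W" for w
    using h2[of "z w" N] ne1 rootN that N unfolding u_def n_def W_def by auto
  have s0: "(\<Sum>w\<in>W. z w ^ 0) = n - 1" using N by (simp add: W_def n_def of_nat_diff)
  have sj: "of_nat j * (\<Sum>w\<in>W. z w ^ j) = - of_nat j" if "j < N" for j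
    using sums[of j] that unfolding W_def by (cases "j = 0") auto
  define A where "A = (\<Sum>w\<in>W. u w)"
  have "A = (\<Sum>w\<in>W. (\<Sum>j<N. of_nat j * z w^j)) / n"
    unfolding A_def by (simp add: uj sum_divide_distrib)
  also have "(\<Sum>w\<in>W. (\<Sum>j<N. of_nat j * z w^j)) = (\<Sum>j<N. of_nat j * (\<Sum>w\<in>W. z w ^ j))"
    by (subst sum.swap) (simp add: sum_distrib_left)
  also have "\<dots> = (\<Sum>j<N. - of_nat j)" by (rule sum.cong) (auto simp: sj)
  finally have A1: "A = - (\<Sum>j<N. of_nat j) / n" by (simp add: sum_negf)
  have An: "A * n = - (\<Sum>j<N. of_nat j)" using A1 n0 by (simp add: field_simps)
  have e1: "2 * (A * n) = - (n * (n - 1))" using An gauss1[of N] unfolding n_def by simp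
  have e2: "(2 * A + (n - 1)) * n = 2 * (A * n) + n * (n - 1)" by algebra
  have "(2 * A + (n - 1)) * n = 0" unfolding e2 e1 by simp
  then have "2 * A + (n - 1) = 0" using n0 by simp
  then have A2': "2 * A = - (n - 1)" by (simp add: algebra_simps)
  then have A2: "A = - (n - 1) / 2" by (simp add: mult.commute eq_divide_eq)
  have ps: "(\<Sum>m<j. (\<Sum>w\<in>W. z w ^ m)) = n - of_nat j" if "1 \<le> j" "j < N" for j
    using that
  proof (induction j)
    case 0 then show ?case by simp
  next
    case (Suc j)
    show ?case
    proof (cases "j = 0")
      case True then show ?thesis using s0 by simp
    next
      case False
      then have "(\<Sum>m<Suc j. (\<Sum>w\<in>W. z w ^ m)) = n - of_nat j + (\<Sum>w\<in>W. z w ^ j)"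
        using Suc by simp
      also have "(\<Sum>w\<in>W. z w ^ j) = -1" using sums[of j] Suc False unfolding W_def by simp
      finally show ?thesis by simp
    qed
  qed
  have Bj: "(\<Sum>w\<in>W. u w * z w ^ j) = n - of_nat j + A" if "1 \<le> j" "j < N" for j
  proof -
    have "(\<Sum>w\<in>W. u w * z w ^ j) = (\<Sum>w\<in>W. (\<Sum>m<j. z w ^ m) + u w)"
      by (rule sum.cong) (auto simp: u_def h3 ne1 W_def)
    also have "\<dots> = (\<Sum>m<j. (\<Sum>w\<in>W. z w ^ m)) + A"
      by (simp add: sum.distrib A_def) (rule sum.swap)
    finally show ?thesis using ps that by simp
  qed
  have Bj': "of_nat j * (\<Sum>w\<in>W. u w * z w ^ j) = of_nat j * (n - of_nat j + A)" if "j < N" for j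
    using Bj[of j] that by (cases "j = 0") auto
  define Q where "Q = (\<Sum>w\<in>W. u w ^ 2)"
  have "Q = (\<Sum>w\<in>W. u w * ((\<Sum>j<N. of_nat j * z w^j) / n))"
    unfolding Q_def by (rule sum.cong) (auto simp: uj power2_eq_square)
  also have "\<dots> = (\<Sum>j<N. of_nat j * (\<Sum>w\<in>W. u w * z w ^ j)) / n"
    by (simp add: sum_divide_distrib sum_distrib_left sum_distrib_right algebra_simps)
      (rule sum.swap)
  also have "\<dots> = (\<Sum>j<N. of_nat j * (n + A) - of_nat j ^ 2) / n"
    by (simp add: Bj' algebra_simps power2_eq_square)
  also have "\<dots> = ((n + A) * (\<Sum>j<N. of_nat j) - (\<Sum>j<N. of_nat j ^ 2)) / n"
    by (simp add: sum_subtractf sum_distrib_left mult.commute)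
  finally have Q1: "Q = ((n + A) * (\<Sum>j<N. of_nat j) - (\<Sum>j<N. of_nat j ^ 2)) / n" .
  have Q2: "Q = (n - 1) * (5 - n) / 12"
  proof -
    have S1: "(\<Sum>j<N. of_nat j) = n * (n - 1) / 2" using gauss1[of N] unfolding n_def by (simp add: mult.commute eq_divide_eq)
    have S2: "(\<Sum>j<N. (of_nat j)^2) = n * (n - 1) * (2 * n - 1) / 6" using gauss2[of N] unfolding n_def by (simp add: mult.commute eq_divide_eq)
    have "Q = ((n + A) * (n * (n - 1) / 2) - n * (n - 1) * (2 * n - 1) / 6) / n"
      unfolding Q1 S1 S2 ..
    also have "\<dots> = ((n + A) * (n - 1) / 2 - (n - 1) * (2 * n - 1) / 6)"
      using n0 by (simp add: field_simps)
    also have "\<dots> = (n - 1) * (5 - n) / 12" unfolding A2 by (simp add: field_simps)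
    finally show ?thesis .
  qed
  have cw: "(\<i>*(z w+1)/(z w-1))^2 = -(1 + 4 * u w + 4 * u w ^ 2)" if "w \<in> W" for w
  proof -
    have "z w - 1 \<noteq> 0" using ne1 that W_def by auto
    then have "\<i>*(z w+1)/(z w-1) = \<i> * (1 + 2 * u w)" unfolding u_def by (simp add: field_simps)
    moreover have "(\<i> * (1 + 2 * u w))^2 = -(1 + 4 * u w + 4 * u w ^ 2)"
      by (simp add: power_mult_distrib power2_eq_square algebra_simps)
    ultimately show ?thesis by simp
  qed
  have cardW: "(\<Sum>w\<in>W. (1::complex)) = n - 1" using N by (simp add: W_def n_def of_nat_diff)
  have "(\<Sum>w\<in>W. (\<i>*(z w+1)/(z w-1))^2) = -((n - 1) + 4 * A + 4 * Q)"
  proof -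
    have "(\<Sum>w\<in>W. (\<i>*(z w+1)/(z w-1))^2) = (\<Sum>w\<in>W. -(1 + 4 * u w + 4 * u w ^ 2))"
      by (rule sum.cong) (auto simp: cw)
    also have "\<dots> = - ((\<Sum>w\<in>W. 1) + 4 * A + 4 * Q)"
      by (simp only: sum_negf sum.distrib sum_distrib_left A_def Q_def)
    finally show ?thesis using cardW by simp
  qed
  also have "\<dots> = (n - 1)*(n - 2)/3" unfolding A2 Q2 by (simp add: field_simps)
  finally show ?thesis unfolding W_def n_def .
qed

lemma cis_eq1_dvd:
  assumes "N > 0" "cis (2*pi*real m / real N) = 1"
  shows "N dvd m"
proof -
  have "cos (2*pi*real m / real N) = 1" using assms(2) by (metis cis.simps(1) one_complex.simps(1))
  then obtain k :: int where k: "2*pi*real m / real N = real_of_int k * 2 * pi" using cos_one_2pi_int by blast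
  then have "real m = k * real N" using assms(1) by (simp add: field_simps)
  then have "int m = k * int N" by (metis of_int_eq_iff of_int_mult of_int_of_nat_eq)
  then have "int N dvd int m" by simp
  then show ?thesis by simp
qed

lemma cis_pow1: assumes "N > 0" shows "cis (2*pi*real m / real N) ^ N = 1"
proof -
  have e: "real N * (2*pi*real m / real N) = real m * (2*pi)" using assms by simp
  have "cis (2*pi*real m / real N) ^ N = cis (real m * (2*pi))"
    by (simp only: Complex.DeMoivre e)
  also have "\<dots> = cis (2 * pi * real m)" by (simp add: mult.commute)
  finally show ?thesis by simp
qed

lemma cot_link:
  fixes \<theta> :: real
  assumes "sin \<theta> \<noteq> 0"
  shows "cis (2*\<theta>) \<noteq> 1" "complex_of_real (cot \<theta>) = \<i>*(cis (2*\<theta>)+1)/(cis (2*\<theta>)-1)"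
proof -
  define s where "s = sin \<theta>"
  define c where "c = cos \<theta>"
  have sc: "s^2 + c^2 = 1" unfolding s_def c_def by simp
  have z: "cis (2*\<theta>) = Complex (c^2 - s^2) (2 * s * c)"
    unfolding s_def c_def by (simp add: complex_eq_iff cos_double sin_double)
  show ne: "cis (2*\<theta>) \<noteq> 1"
  proof
    assume "cis (2*\<theta>) = 1"
    then have "c^2 - s^2 = 1" using z by (simp add: complex_eq_iff)
    with sc have "s^2 = 0" by linarith
    then show False using assms s_def by simp
  qed
  have "complex_of_real (cot \<theta>) * (cis (2*\<theta>) - 1) = \<i>*(cis (2*\<theta>)+1)"
  proof -
    have s0: "s \<noteq> 0" using assms s_def by simp
    have "c / s * (c\<^sup>2 - s\<^sup>2 - 1) = - (2 * s * c)"
      using s0 sc by (simp add: field_simps power2_eq_square) (metis distrib_left mult.right_neutral add.commute)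
    moreover have "c / s * (2 * s * c) = c\<^sup>2 - s\<^sup>2 + 1"
      using s0 sc by (simp add: field_simps power2_eq_square)
    ultimately show ?thesis unfolding z cot_def s_def[symmetric] c_def[symmetric]
      by (simp add: complex_eq_iff)
  qed
  moreover have "cis (2*\<theta>) - 1 \<noteq> 0" using ne by simp
  ultimately show "complex_of_real (cot \<theta>) = \<i>*(cis (2*\<theta>)+1)/(cis (2*\<theta>)-1)"
    by (simp add: field_simps)
qed

lemma sin0_cis: "sin \<theta> = 0 \<Longrightarrow> cis (2*\<theta>) = 1"
  by (simp add: complex_eq_iff cos_double_sin sin_double)

lemma cotsum:
  assumes p: "prime N" and h: "h \<in> {1..N-1}"
  shows "(\<Sum>w=1..N-1. cot (pi * real h * real w / real N) ^ 2) = (real N - 1)*(real N - 2)/3"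
proof -
  have N2: "N \<ge> 2" using prime_ge_2_nat p by blast
  have nd: "\<not> N dvd h * w" if "w \<in> {1..N-1}" for w
  proof
    assume "N dvd h * w"
    then have "N dvd h \<or> N dvd w" using prime_dvd_mult_iff p by blast
    then show False using h that N2 by (auto dest: dvd_imp_le)
  qed
  define z where "z w = cis (2*pi*real (h*w) / real N)" for w
  have th: "2 * (pi * real h * real w / real N) = 2*pi*real (h*w) / real N" for w by simp
  have ne1: "z w \<noteq> 1" if "w \<in> {1..N-1}" for w
    using cis_eq1_dvd[of N "h*w"] nd[OF that] N2 unfolding z_def by auto
  have rootN: "z w ^ N = 1" for w unfolding z_def using cis_pow1[of N "h*w"] N2 by simp
  have sums: "(\<Sum>w=1..N-1. z w ^ m) = -1" if m: "1 \<le> m" "m < N" for m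
  proof -
    define \<zeta> where "\<zeta> = cis (2*pi*real (h*m) / real N)"
    have zm: "z w ^ m = \<zeta> ^ w" for w
    proof -
      have "real m * (2*pi*real (h*w) / real N) = real w * (2*pi*real (h*m) / real N)"
        by (simp add: algebra_simps)
      then show ?thesis unfolding z_def \<zeta>_def Complex.DeMoivre by (simp only:)
    qed
    have "\<not> N dvd h * m" using nd m by auto
    then have z1: "\<zeta> \<noteq> 1" using cis_eq1_dvd[of N "h*m"] N2 unfolding \<zeta>_def by auto
    have zN: "\<zeta> ^ N = 1" unfolding \<zeta>_def using cis_pow1[of N "h*m"] N2 by simp
    have g: "(\<Sum>w<N. \<zeta>^w) = 0" using z1 zN by (simp add: sum_gp_strict)
    have "{..<N} = {0..N-1}" using N2 by auto
    then have "(\<Sum>w<N. \<zeta>^w) = 1 + (\<Sum>w=1..N-1. \<zeta>^w)"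
      using sum.atLeast_Suc_atMost[of 0 "N-1" "\<lambda>w. \<zeta>^w"] by simp
    with g have "(\<Sum>w=1..N-1. \<zeta>^w) = -1" by (simp add: eq_neg_iff_add_eq_0 add.commute)
    then show ?thesis by (simp add: zm)
  qed
  have cl: "complex_of_real (cot (pi * real h * real w / real N)) = \<i>*(z w+1)/(z w-1)"
    if "w \<in> {1..N-1}" for w
  proof -
    have "sin (pi * real h * real w / real N) \<noteq> 0"
      using sin0_cis[of "pi * real h * real w / real N"] ne1[OF that] unfolding z_def th by auto
    from cot_link(2)[OF this] show ?thesis unfolding z_def th .
  qed
  have "complex_of_real (\<Sum>w=1..N-1. cot (pi * real h * real w / real N) ^ 2)
      = (\<Sum>w=1..N-1. (\<i>*(z w+1)/(z w-1))^2)"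
    by (simp only: of_real_sum of_real_power) (rule sum.cong, auto simp: cl)
  also have "\<dots> = (of_nat N - 1)*(of_nat N - 2)/3"
    using core[of N z] N2 ne1 rootN sums by auto
  also have "\<dots> = complex_of_real ((real N - 1)*(real N - 2)/3)" by simp
  finally show ?thesis by (simp only: of_real_eq_iff)
qed


lemma harm_le: "harm_ord n 2 \<le> pi^2/6"
proof -
  have s: "(\<lambda>k. 1 / (real k + 1)^2) sums (pi^2/6)"
    using inverse_squares_sums by (simp add: add.commute)
  have "harm_ord n 2 = (\<Sum>k<n. 1 / (real k + 1)^2)"
    unfolding harm_ord_def
    by (simp add: sum.atLeast1_atMost_eq powr_minus_divide add.commute)
  also have "\<dots> \<le> (\<Sum>k. 1 / (real k + 1)^2)"
    by (rule sum_le_suminf) (use s in \<open>auto simp: sums_iff\<close>)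
  also have "\<dots> = pi^2/6" using s by (simp add: sums_iff)
  finally show ?thesis .
qed

lemma harm_eq: "harm_ord n 2 = (\<Sum>h=1..n. 1 / real h ^ 2)"
  unfolding harm_ord_def by (rule sum.cong) (auto simp: powr_minus_divide)

theorem lemma3:
  fixes N :: nat
  assumes "prime N" and "N \<ge> 3"
  shows "(1 / (real N - 1)) * (\<Sum>w=1..N-1. (1 / real N ^ 2) *
            (\<Sum>h=1..N-1. cot (pi * real h * real w / real N) ^ 2 / real h ^ 2))
           = (real N - 2) / (3 * real N ^ 2) * harm_ord (N - 1) 2
       \<and> (real N - 2) / (3 * real N ^ 2) * harm_ord (N - 1) 2 \<le> pi ^ 2 / (18 * real N)"
proof
  have N3: "real N \<ge> 3" using assms by simp
  have "(\<Sum>w=1..N-1. (1 / real N ^ 2) *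
            (\<Sum>h=1..N-1. cot (pi * real h * real w / real N) ^ 2 / real h ^ 2))
      = (1 / real N ^ 2) * (\<Sum>w=1..N-1. \<Sum>h=1..N-1. cot (pi * real h * real w / real N) ^ 2 / real h ^ 2)"
    by (simp add: sum_distrib_left)
  also have "(\<Sum>w=1..N-1. \<Sum>h=1..N-1. cot (pi * real h * real w / real N) ^ 2 / real h ^ 2)
      = (\<Sum>h=1..N-1. (\<Sum>w=1..N-1. cot (pi * real h * real w / real N) ^ 2) / real h ^ 2)"
    by (subst sum.swap) (simp add: sum_divide_distrib)
  also have "\<dots> = (\<Sum>h=1..N-1. ((real N - 1)*(real N - 2)/3) * (1 / real h ^ 2))"
  proof (rule sum.cong[OF refl])
    fix h assume "h \<in> {1..N-1}"
    show "(\<Sum>w=1..N-1. cot (pi * real h * real w / real N) ^ 2) / real h ^ 2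
      = ((real N - 1)*(real N - 2)/3) * (1 / real h ^ 2)" by (subst cotsum[OF assms(1) \<open>h \<in> {1..N-1}\<close>]) simp
  qed
  also have "\<dots> = ((real N - 1)*(real N - 2)/3) * harm_ord (N - 1) 2"
    by (simp add: harm_eq sum_distrib_left)
  finally have e: "(\<Sum>w=1..N-1. (1 / real N ^ 2) *
            (\<Sum>h=1..N-1. cot (pi * real h * real w / real N) ^ 2 / real h ^ 2))
      = (1 / real N ^ 2) * (((real N - 1)*(real N - 2)/3) * harm_ord (N - 1) 2)" .
  show "(1 / (real N - 1)) * (\<Sum>w=1..N-1. (1 / real N ^ 2) *
            (\<Sum>h=1..N-1. cot (pi * real h * real w / real N) ^ 2 / real h ^ 2))
           = (real N - 2) / (3 * real N ^ 2) * harm_ord (N - 1) 2"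
    unfolding e using N3 by (simp add: field_simps)
  have H0: "harm_ord (N - 1) 2 \<ge> 0" unfolding harm_eq by (rule sum_nonneg) auto
  have H1: "harm_ord (N - 1) 2 \<le> pi^2/6" by (rule harm_le)
  have "(real N - 2) * harm_ord (N - 1) 2 \<le> real N * (pi^2/6)"
  proof -
    have "(real N - 2) * harm_ord (N - 1) 2 \<le> real N * harm_ord (N - 1) 2"
      using H0 by (intro mult_right_mono) auto
    also have "\<dots> \<le> real N * (pi^2/6)" using H1 by (intro mult_left_mono) auto
    finally show ?thesis .
  qed
  then have "((real N - 2) * harm_ord (N - 1) 2) / (3 * real N ^ 2) \<le> (real N * (pi^2/6)) / (3 * real N ^ 2)"
    using N3 by (intro divide_right_mono) auto
  also have "(real N * (pi^2/6)) / (3 * real N ^ 2) = pi ^ 2 / (18 * real N)"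
    using N3 by (simp add: field_simps power2_eq_square)
  finally show "(real N - 2) / (3 * real N ^ 2) * harm_ord (N - 1) 2 \<le> pi ^ 2 / (18 * real N)"
    by simp
qed

end
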